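(* For every $a_1,\dots,a_{2^n}\in F$ and every $w\in F^d$: (1) there is a prover strategy $r$ such that Alice's output equals $\tilde A(w)$ with probability $1$; (2) for every prover strategy $r$, Alice's output lies in $\{\tilde A(w),Err\}$ with probability at least $1-1/n^{c-1.5}$.
   Context: Parameters. - $n>4$ is a power of $2$ with $\log_2 n$ even, and $d:=2n/\log_2 n$ is assumed to be an integer. - $F$ is a finite field with $|F|=2^a=n^c$, where $c\ge 2$ is a constant integer. - $H\subset F$ is a fixed subset with $|H|=\sqrt n$ (so $|H^d|=2^n$), and $\pi:H^d\to[2^n]$ is a fixed bijection. Low degree extension. - For $a_1,\dots,a_{2^n}\in F$, define $A:H^d\to F$ by $A(z)=a_{\pi(z)}$. - The low degree extension $\tilde A:F^d\to F$ is the unique polynomial of degree at most $|H|-1$ in each variable that agrees with $A$ on $H^d$. Its total degree is less than $n^{1.5}$. - The quantum low degree extension is $|\Psi(a_1,\dots,a_{2^n})\rangle=|F|^{-d/2}\sum_{z\in F^d}|z_1\rangle\cdots|z_d\rangle|\tilde A(z)\rangle$, a state of $O(n)$ qubits where each register holds an element of $F$. Measuring it in the standard basis yields a uniformly random $z\in F^d$ together with $\tilde A(z)$. Retrieval protocol (Alice holds $|\Psi(a_1,\dots,a_{2^n})\rangle$ and wants $\tilde A(w)$). - Alice measures the state, obtaining a uniform $z\in F^d$ and $\tilde A(z)$. If $z=w$, she outputs $\tilde A(z)$. - Otherwise she sends the line $\ell=\{w+(z-w)t:t\in F\}$ to the prover Merlin. Merlin knows $w$ and $\ell$ but not $z$.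 - A prover strategy $r$ is a deterministic assignment, to each line $\ell$ through $w$, of a function $g_\ell:\ell\to F$. - Let $g(t)=g_\ell(w+(z-w)t)$. Alice outputs $Err$ if $g$ is not a univariate polynomial of degree $<n^{1.5}$, or if $g(1)\ne\tilde A(z)$. Otherwise she outputs $g(0)$. *)

theory Defs
  imports "HOL-Library.FuncSet" "HOL-Computational_Algebra.Polynomial" Complex_Main
begin

definition cube :: "nat \<Rightarrow> 'a set \<Rightarrow> (nat \<Rightarrow> 'a) set" where
  "cube d S = ({..<d} \<rightarrow>\<^sub>E S)"

definition lagrange_basis :: "'a::field set \<Rightarrow> 'a \<Rightarrow> 'a \<Rightarrow> 'a" where
  "lagrange_basis H h x = (\<Prod>h'\<in>H - {h}. (x - h') / (h - h'))"

text \<open>The low degree extension of A : H^d \<rightarrow> F: the unique polynomial of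
  individual degree at most |H|-1 agreeing with A on H^d, written out
  via multivariate Lagrange interpolation.\<close>
definition lde :: "'a::field set \<Rightarrow> nat \<Rightarrow> ((nat \<Rightarrow> 'a) \<Rightarrow> 'a) \<Rightarrow> (nat \<Rightarrow> 'a) \<Rightarrow> 'a" where
  "lde H d A z = (\<Sum>h\<in>cube d H. A h * (\<Prod>i<d. lagrange_basis H (h i) (z i)))"

definition line_pt :: "nat \<Rightarrow> (nat \<Rightarrow> 'a::field) \<Rightarrow> (nat \<Rightarrow> 'a) \<Rightarrow> 'a \<Rightarrow> (nat \<Rightarrow> 'a)" where
  "line_pt d w z t = (\<lambda>i\<in>{..<d}. w i + (z i - w i) * t)"

text \<open>The line through w and z, as a set of points (all Merlin gets to see).\<close>
definition line_through :: "nat \<Rightarrow> (nat \<Rightarrow> 'a::field) \<Rightarrow> (nat \<Rightarrow> 'a) \<Rightarrow> (nat \<Rightarrow> 'a) set" where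
  "line_through d w z = range (line_pt d w z)"

definition is_poly_deg_lt :: "('a::field \<Rightarrow> 'a) \<Rightarrow> real \<Rightarrow> bool" where
  "is_poly_deg_lt g D = (\<exists>p. real (degree p) < D \<and> (\<forall>t. g t = poly p t))"

text \<open>Alice's output (None = Err) when the measurement yields z, for prover
  strategy r assigning to each line (a set of points) a function on points.\<close>
definition alice_output ::
  "real \<Rightarrow> nat \<Rightarrow> ((nat \<Rightarrow> 'a::field) \<Rightarrow> 'a) \<Rightarrow> (nat \<Rightarrow> 'a)
     \<Rightarrow> ((nat \<Rightarrow> 'a) set \<Rightarrow> (nat \<Rightarrow> 'a) \<Rightarrow> 'a) \<Rightarrow> (nat \<Rightarrow> 'a) \<Rightarrow> 'a option" where
  "alice_output D d At w r z =
     (if z = w then Some (At z)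
      else (let g = (\<lambda>t. r (line_through d w z) (line_pt d w z t)) in
            if \<not> is_poly_deg_lt g D \<or> g 1 \<noteq> At z then None else Some (g 0)))"

definition prob_unif :: "'b set \<Rightarrow> ('b \<Rightarrow> bool) \<Rightarrow> real" where
  "prob_unif S P = real (card {z\<in>S. P z}) / real (card S)"

end

theory Submission
  imports Defs
begin
definition polyf :: "nat \<Rightarrow> ('a::field \<Rightarrow> 'a) \<Rightarrow> bool" where
  "polyf m f = (\<exists>p. degree p \<le> m \<and> (\<forall>t. f t = poly p t))"

lemma polyf_const: "polyf 0 (\<lambda>t. c)"
  unfolding polyf_def by (rule exI[of _ "[:c:]"]) simp

lemma polyf_lin: "polyf 1 (\<lambda>t. a + b * t)"
  unfolding polyf_def by (rule exI[of _ "[:a,b:]"]) (simp add: algebra_simps)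

lemma polyf_mono: "polyf m f \<Longrightarrow> m \<le> m' \<Longrightarrow> polyf m' f"
  unfolding polyf_def using order.trans by blast

lemma polyf_mult: "polyf m1 f \<Longrightarrow> polyf m2 g \<Longrightarrow> polyf (m1 + m2) (\<lambda>t. f t * g t)"
  unfolding polyf_def
proof (elim exE conjE)
  fix p q assume "degree p \<le> m1" "\<forall>t. f t = poly p t" "degree q \<le> m2" "\<forall>t. g t = poly q t"
  then show "\<exists>r. degree r \<le> m1 + m2 \<and> (\<forall>t. f t * g t = poly r t)"
    by (intro exI[of _ "p * q"]) (auto intro: order.trans[OF degree_mult_le])
qed

lemma polyf_add: "polyf m f \<Longrightarrow> polyf m g \<Longrightarrow> polyf m (\<lambda>t. f t + g t)"
  unfolding polyf_def
proof (elim exE conjE)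
  fix p q assume "degree p \<le> m" "\<forall>t. f t = poly p t" "degree q \<le> m" "\<forall>t. g t = poly q t"
  then show "\<exists>r. degree r \<le> m \<and> (\<forall>t. f t + g t = poly r t)"
    by (intro exI[of _ "p + q"]) (auto intro: order.trans[OF degree_add_le])
qed

lemma polyf_prod: "finite A \<Longrightarrow> (\<And>i. i \<in> A \<Longrightarrow> polyf (e i) (f i)) \<Longrightarrow>
   polyf (\<Sum>i\<in>A. e i) (\<lambda>t. \<Prod>i\<in>A. f i t)"
proof (induction A rule: finite_induct)
  case empty then show ?case using polyf_const[of 1] by simp
next
  case (insert x F)
  then show ?case using polyf_mult[of "e x" "f x" "sum e F" "\<lambda>t. \<Prod>i\<in>F. f i t"] by simp
qed

lemma polyf_sum: "(\<And>i. i \<in> A \<Longrightarrow> polyf m (f i)) \<Longrightarrow> polyf m (\<lambda>t. \<Sum>i\<in>A. f i t)"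
proof (induction A rule: infinite_finite_induct)
  case (infinite A) then show ?case using polyf_mono[OF polyf_const[of 0]] by simp
next
  case empty then show ?case using polyf_mono[OF polyf_const[of 0]] by simp
next
  case (insert x F)
  then show ?case using polyf_add[of m "f x" "\<lambda>t. \<Sum>i\<in>F. f i t"] by simp
qed

lemma lde_line_polyf:
  fixes H :: "'a::{finite,field} set"
  shows "polyf (d * (card H - 1)) (\<lambda>t. lde H d A (line_pt d w z t))"
proof -
  have "polyf (d * (card H - 1)) (\<lambda>t. A h * (\<Prod>i<d. lagrange_basis H (h i) (line_pt d w z t i)))"
    if h: "h \<in> cube d H" for h
  proof -
    have eq: "(\<lambda>t. A h * (\<Prod>i<d. lagrange_basis H (h i) (line_pt d w z t i))) =
       (\<lambda>t. A h * (\<Prod>i<d. \<Prod>h'\<in>H - {h i}. ((w i - h') / (h i - h') + ((z i - w i) / (h i - h')) * t)))"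
      by (rule ext, rule arg_cong[where f="\<lambda>x. A h * x"], rule prod.cong, simp,
          auto simp: lagrange_basis_def line_pt_def divide_inverse algebra_simps intro!: prod.cong)
    have hi: "h i \<in> H" if "i < d" for i using h that unfolding cube_def by auto
    have "polyf (\<Sum>i<d. \<Sum>h'\<in>H - {h i}. 1) (\<lambda>t. \<Prod>i<d. \<Prod>h'\<in>H - {h i}. ((w i - h') / (h i - h') + ((z i - w i) / (h i - h')) * t))"
      by (intro polyf_prod polyf_lin) auto
    moreover have "(\<Sum>i<d. \<Sum>h'\<in>H - {h i}. (1::nat)) = d * (card H - 1)"
      using hi by simp
    ultimately show ?thesis unfolding eq using polyf_mult[OF polyf_const[of "A h"]] by fastforce
  qed
  then show ?thesis unfolding lde_def by (intro polyf_sum)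
qed

lemma line_pt_comp: "line_pt d w (line_pt d w z s) t = line_pt d w z (s * t)"
  unfolding line_pt_def by (rule ext) (simp add: algebra_simps)

lemma line_pt_1: "z \<in> cube d S \<Longrightarrow> line_pt d w z 1 = z"
  unfolding line_pt_def cube_def by (rule ext) (auto simp: PiE_def extensional_def)

lemma line_pt_0: "w \<in> cube d S \<Longrightarrow> line_pt d w z 0 = w"
  unfolding line_pt_def cube_def by (rule ext) (auto simp: PiE_def extensional_def)

lemma line_pt_same: "w \<in> cube d S \<Longrightarrow> line_pt d w w s = w"
  unfolding line_pt_def cube_def by (rule ext) (auto simp: PiE_def extensional_def)

lemma line_pt_in: "line_pt d w z s \<in> cube d UNIV"
  unfolding line_pt_def cube_def by auto

lemma line_through_same: "(s::'a::field) \<noteq> 0 \<Longrightarrow> line_through d w (line_pt d w z s) = line_through d w z"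
  unfolding line_through_def line_pt_comp
proof (intro equalityI subsetI)
  fix x assume "s \<noteq> 0" "x \<in> range (\<lambda>t. line_pt d w z (s * t))" then show "x \<in> range (line_pt d w z)" by auto
next
  fix x assume s: "s \<noteq> 0" and "x \<in> range (line_pt d w z)"
  then obtain t where "x = line_pt d w z t" by auto
  then have "x = line_pt d w z (s * (t / s))" using s by simp
  then show "x \<in> range (\<lambda>t. line_pt d w z (s * t))" by blast
qed

lemma bad_line_bound:
  fixes w z :: "nat \<Rightarrow> 'a::{finite,field}"
  assumes w: "w \<in> cube d UNIV" and z: "z \<in> cube d UNIV" and zw: "z \<noteq> w"
    and Q: "real (degree Q) < real N" "\<And>t. At (line_pt d w z t) = poly Q t"
    and B_def: "B = {z\<in>cube d UNIV. alice_output (real N) d At w r z \<notin> {Some (At w), None}}"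
  shows "card {s\<in>UNIV - {0}. line_pt d w z s \<in> B} \<le> N - 1"
proof (cases "{s\<in>UNIV - {0}. line_pt d w z s \<in> B} = {}")
  case True then show ?thesis by (simp only: card.empty)
next
  case False
  define S where "S = {s\<in>UNIV - {0}. line_pt d w z s \<in> B}"
  define L where "L = line_through d w z"
  define G where "G = (\<lambda>t. r L (line_pt d w z t))"
  have key: "line_pt d w z s \<noteq> w \<and> is_poly_deg_lt (\<lambda>t. G (s * t)) (real N) \<and> G s = At (line_pt d w z s)
      \<and> G 0 \<noteq> At w" if s: "s \<in> S" for s
  proof -
    let ?z = "line_pt d w z s"
    have s0: "s \<noteq> 0" and zB: "?z \<in> B" using s S_def by auto
    have ne: "?z \<noteq> w"
    proof
      assume "?z = w" then have "alice_output (real N) d At w r ?z = Some (At w)"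
        unfolding alice_output_def by simp
      then show False using zB B_def by auto
    qed
    have g: "(\<lambda>t. r (line_through d w ?z) (line_pt d w ?z t)) = (\<lambda>t. G (s * t))"
      unfolding G_def L_def line_through_same[OF s0] line_pt_comp ..
    have "alice_output (real N) d At w r ?z \<notin> {Some (At w), None}" using zB B_def by auto
    then show ?thesis using ne unfolding alice_output_def g Let_def
      by (auto split: if_splits simp: line_pt_1[OF line_pt_in])
  qed
  from False obtain s0 where s0: "s0 \<in> S" unfolding S_def by auto
  then have s0nz: "s0 \<noteq> 0" unfolding S_def by auto
  from key[OF s0] obtain p0 where p0: "real (degree p0) < real N" "\<And>t. G (s0 * t) = poly p0 t"
    unfolding is_poly_deg_lt_def by auto
  define P where "P = pcompose p0 [:0, inverse s0:]"
  have GP: "G t = poly P t" for t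
  proof -
    have "G t = G (s0 * (t * inverse s0))" using s0nz by (simp add: field_simps)
    also have "\<dots> = poly P t" unfolding p0(2) P_def poly_pcompose by (simp add: algebra_simps)
    finally show ?thesis .
  qed
  have degP: "degree P \<le> degree p0" unfolding P_def
    using degree_pcompose_le[of p0 "[:0, inverse s0:]"] by (cases "inverse s0 = 0") auto
  have "poly (P - Q) 0 \<noteq> 0" using key[OF s0] GP Q(2)[of 0] line_pt_0[OF w] by auto
  then have nz: "P - Q \<noteq> 0" by auto
  have "S \<subseteq> {x. poly (P - Q) x = 0}" using key GP Q(2) by auto
  then have "card S \<le> card {x. poly (P - Q) x = 0}" by (intro card_mono) auto
  also have "\<dots> \<le> degree (P - Q)" by (rule card_poly_roots_bound[OF nz])
  also have "\<dots> \<le> max (degree P) (degree Q)" by (rule degree_diff_le_max)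
  also have "\<dots> \<le> N - 1" using degP p0(1) Q(1) by auto
  finally show ?thesis unfolding S_def .
qed

theorem mainTheorem3:
  fixes n k d c :: nat and H :: "'a::{finite,field} set"
    and \<pi> :: "(nat \<Rightarrow> 'a) \<Rightarrow> nat" and a :: "nat \<Rightarrow> 'a" and w :: "nat \<Rightarrow> 'a"
  assumes n_def: "n = 2 ^ k" and k_even: "even k" and n_gt: "n > 4"
    and d_def: "d * k = 2 * n"
    and c_ge: "c \<ge> 2" and card_F: "card (UNIV :: 'a set) = n ^ c"
    and card_H: "(card H)\<^sup>2 = n"
    and pi_bij: "bij_betw \<pi> (cube d H) {1..2 ^ n}"
    and w_in: "w \<in> cube d (UNIV :: 'a set)"
  shows "(\<exists>r. prob_unif (cube d (UNIV :: 'a set))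
              (\<lambda>z. alice_output (real n powr 1.5) d (lde H d (\<lambda>h. a (\<pi> h))) w r z
                   = Some (lde H d (\<lambda>h. a (\<pi> h)) w)) = 1)
       \<and> (\<forall>r. prob_unif (cube d (UNIV :: 'a set))
              (\<lambda>z. alice_output (real n powr 1.5) d (lde H d (\<lambda>h. a (\<pi> h))) w r z
                   \<in> {Some (lde H d (\<lambda>h. a (\<pi> h)) w), None})
            \<ge> 1 - 1 / real n powr (real c - 1.5))"
proof -
  define At where "At = lde H d (\<lambda>h. a (\<pi> h))"
  define m where "m = card H"
  define N where "N = n * m"
  define C where "C = cube d (UNIV :: 'a set)"
  define q where "q = card (UNIV :: 'a set)"
  have k2: "k \<ge> 2"
  proof (rule ccontr)
    assume "\<not> k \<ge> 2" then have "k = 0 \<or> k = 1" by auto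
    then show False using n_def n_gt by auto
  qed
  have m1: "m \<ge> 1" using card_H n_gt unfolding m_def by (cases "card H") auto
  have dn: "d \<le> n"
  proof -
    have "d * 2 \<le> d * k" using k2 by (intro mult_le_mono2)
    then show ?thesis using d_def by simp
  qed
  have degN: "d * (m - 1) < N"
  proof -
    have "d * (m - 1) \<le> n * (m - 1)" using dn by (rule mult_le_mono1)
    also have "\<dots> < n * m" using m1 n_gt by simp
    finally show ?thesis unfolding N_def .
  qed
  have sq: "sqrt (real n) = real m" using card_H unfolding m_def
    by (metis of_nat_0_le_iff of_nat_power real_sqrt_abs2 abs_of_nonneg real_sqrt_abs power2_eq_square)
  have D: "real n powr 1.5 = real N"
  proof -
    have "real n powr 1.5 = real n powr (1 + 1/2)" by simp
    also have "\<dots> = real n powr 1 * real n powr (1/2)" by (rule powr_add)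
    also have "\<dots> = real n * sqrt (real n)" using n_gt by (simp add: powr_half_sqrt)
    finally show ?thesis using sq unfolding N_def by simp
  qed
  have Qex: "\<exists>Q. real (degree Q) < real N \<and> (\<forall>t. At (line_pt d w z t) = poly Q t)" for z
  proof -
    from lde_line_polyf[of d H "\<lambda>h. a (\<pi> h)" w z] obtain Q where
      "degree Q \<le> d * (m - 1)" "\<forall>t. At (line_pt d w z t) = poly Q t"
      unfolding polyf_def At_def m_def by auto
    then show ?thesis using degN by (intro exI[of _ Q]) auto
  qed
  have finC: "finite C" unfolding C_def cube_def by (intro finite_PiE) auto
  have wC: "w \<in> C" using w_in C_def by simp
  have Cpos: "card C > 0" using finC wC by (auto simp: card_gt_0_iff)
  have part1: "prob_unif C (\<lambda>z. alice_output (real N) d At w (\<lambda>L p. At p) z = Some (At w)) = 1"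
  proof -
    have "alice_output (real N) d At w (\<lambda>L p. At p) z = Some (At w)" if z: "z \<in> C" for z
    proof (cases "z = w")
      case True then show ?thesis unfolding alice_output_def by simp
    next
      case False
      obtain Q where Q: "real (degree Q) < real N" "\<forall>t. At (line_pt d w z t) = poly Q t" using Qex by blast
      have "is_poly_deg_lt (\<lambda>t. At (line_pt d w z t)) (real N)"
        unfolding is_poly_deg_lt_def using Q by blast
      then show ?thesis using False z C_def
        unfolding alice_output_def Let_def by (simp add: line_pt_1 line_pt_0[OF w_in])
    qed
    then have "{z\<in>C. alice_output (real N) d At w (\<lambda>L p. At p) z = Some (At w)} = C" by auto
    then show ?thesis unfolding prob_unif_def using Cpos by simp
  qed
  have part2: "prob_unif C (\<lambda>z. alice_output (real N) d At w r z \<in> {Some (At w), None})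
      \<ge> 1 - real N / real q" for r
  proof -
    define B where "B = {z\<in>cube d UNIV. alice_output (real N) d At w r z \<notin> {Some (At w), None}}"
    define T where "T = (UNIV :: 'a set) - {0}"
    define lp where "lp = line_pt d w"
    have BC: "B \<subseteq> C - {w}" unfolding B_def C_def alice_output_def by auto
    have finB: "finite B" using BC finC finite_subset by blast
    have each: "card {s\<in>T. lp z s \<in> B} \<le> N - 1" if z: "z \<in> C - {w}" for z
    proof -
      obtain Q where Q: "real (degree Q) < real N" "\<forall>t. At (line_pt d w z t) = poly Q t" using Qex by blast
      show ?thesis unfolding T_def lp_def
        by (rule bad_line_bound[OF w_in _ _ Q(1) _ B_def]) (use z C_def Q(2) in auto)
    qed
    have cnt: "card {z\<in>C - {w}. lp z s \<in> B} = card B" if s: "s \<in> T" for s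
    proof -
      have s0: "s \<noteq> 0" using s T_def by auto
      have "bij_betw (\<lambda>z. lp z s) {z\<in>C - {w}. lp z s \<in> B} B"
      proof (rule bij_betw_byWitness[where f'="\<lambda>z. lp z (inverse s)"])
        show "\<forall>x\<in>{z \<in> C - {w}. lp z s \<in> B}. lp (lp x s) (inverse s) = x"
          using s0 unfolding lp_def C_def by (auto simp: line_pt_comp line_pt_1)
        show "\<forall>y\<in>B. lp (lp y (inverse s)) s = y"
          using s0 BC unfolding lp_def C_def by (auto simp: line_pt_comp line_pt_1)
        show "(\<lambda>z. lp z s) ` {z \<in> C - {w}. lp z s \<in> B} \<subseteq> B" by auto
        show "(\<lambda>z. lp z (inverse s)) ` B \<subseteq> {z \<in> C - {w}. lp z s \<in> B}"
        proof
          fix x assume "x \<in> (\<lambda>z. lp z (inverse s)) ` B"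
          then obtain y where y: "y \<in> B" "x = lp y (inverse s)" by auto
          have xback: "lp x s = y" using y s0 BC unfolding lp_def C_def by (auto simp: line_pt_comp line_pt_1)
          have "x \<noteq> w"
          proof
            assume "x = w" then have "lp x s = w" unfolding lp_def using line_pt_same[OF w_in] by simp
            then show False using xback y BC by auto
          qed
          moreover have "x \<in> C" using y unfolding lp_def C_def by (simp add: line_pt_in)
          ultimately show "x \<in> {z \<in> C - {w}. lp z s \<in> B}" using xback y by auto
        qed
      qed
      then show ?thesis by (rule bij_betw_same_card)
    qed
    have finT: "finite T" by simp
    have "(\<Sum>z\<in>C - {w}. card {s\<in>T. lp z s \<in> B}) = (\<Sum>z\<in>C - {w}. \<Sum>s\<in>T. if lp z s \<in> B then 1 else 0)"
      by (intro sum.cong refl) (simp add: sum.inter_filter[symmetric])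
    also have "\<dots> = (\<Sum>s\<in>T. \<Sum>z\<in>C - {w}. if lp z s \<in> B then 1 else 0)" by (rule sum.swap)
    also have "\<dots> = (\<Sum>s\<in>T. card {z\<in>C - {w}. lp z s \<in> B})"
      using finC by (intro sum.cong refl) (simp add: sum.inter_filter[symmetric])
    also have "\<dots> = (\<Sum>s\<in>T. card B)" using cnt by simp
    finally have "card T * card B = (\<Sum>z\<in>C - {w}. card {s\<in>T. lp z s \<in> B})" by simp
    also have "\<dots> \<le> (\<Sum>z\<in>C - {w}. N - 1)" using each by (intro sum_mono) auto
    also have "\<dots> \<le> card C * (N - 1)" using finC by (simp add: card_Diff1_le)
    finally have main: "card T * card B \<le> card C * (N - 1)" .
    have cT: "card T = q - 1" unfolding T_def q_def by (simp add: card_Diff_singleton)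
    have q1: "q \<ge> 1" unfolding q_def using card_F n_gt by simp
    have N1: "N \<ge> 1" unfolding N_def using m1 n_gt by simp
    have BleC: "card B \<le> card C" using BC finC by (intro card_mono) auto
    have "q * card B \<le> card C * N"
    proof -
      have "q * card B = card T * card B + card B" using cT q1 by (cases q) auto
      also have "\<dots> \<le> card C * (N - 1) + card C" using main BleC by simp
      also have "\<dots> = card C * N" using N1 by (cases N) auto
      finally show ?thesis .
    qed
    then have ineq: "real q * real (card B) \<le> real (card C) * real N" by (metis of_nat_le_iff of_nat_mult)
    have split: "card {z\<in>C. alice_output (real N) d At w r z \<in> {Some (At w), None}} = card C - card B"
    proof -
      have "{z\<in>C. alice_output (real N) d At w r z \<in> {Some (At w), None}} = C - B"
        unfolding B_def C_def by auto
      moreover have "B \<subseteq> C" using BC by auto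
      ultimately show ?thesis using finB by (simp add: card_Diff_subset)
    qed
    have qpos: "real q > 0" using q1 by simp
    have "prob_unif C (\<lambda>z. alice_output (real N) d At w r z \<in> {Some (At w), None})
        = 1 - real (card B) / real (card C)"
      unfolding prob_unif_def split using BleC Cpos by (simp add: of_nat_diff field_simps)
    moreover have "real (card B) / real (card C) \<le> real N / real q"
      using ineq Cpos qpos by (simp add: field_simps)
    ultimately show ?thesis by simp
  qed
  have E: "1 / real n powr (real c - 1.5) = real N / real q"
  proof -
    have "real n powr (real c - 1.5) = real n powr real c / real n powr 1.5"
      by (rule powr_diff)
    also have "\<dots> = real q / real N" unfolding D q_def card_F using n_gt by (simp add: powr_realpow)
    finally show ?thesis by simp
  qed
  show ?thesis
    using part1 part2 unfolding D E At_def[symmetric] C_def[symmetric] by blast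
qed

end
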